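(* Let $n\ge1$, $\Lambda\ge1$, and let $u\in C(\overline{B_4})$, $B_4\subset\mathbb{R}^n$ the open ball of radius $4$ centered at $0$, satisfy $u\ge0$ and $M_\Lambda^-(D^2u)\le0$ in $B_4$ in the viscosity sense. Then $$\inf_{B_\rho(x_0)}u\le 2\,\rho^{-n\Lambda}u(0)$$ for all $x_0\in B_1$ and all $0<\rho\le 1$.
   Context: For a symmetric $n\times n$ matrix $N$, $M_\Lambda^-(N) := (\text{sum of positive eigenvalues of }N) + \Lambda\,(\text{sum of negative eigenvalues of }N)$. For a bounded domain $\Omega$ and $u,\varphi\in C(\overline\Omega)$, $\varphi$ is tangent from below to $u$ in $\Omega$ at $x_0\in\Omega$ if $\varphi\le u$ in $\overline\Omega$ and $\varphi(x_0)=u(x_0)$. $M_\Lambda^-(D^2u)\le 0$ in the viscosity sense in $\Omega$ means $M_\Lambda^-(D^2\varphi(x_0))\le 0$ whenever $\varphi\in C^2(\overline\Omega)$ is tangent from below to $u$ in $\Omega$ at $x_0\in\Omega$. $B_r(x)$ denotes the open ball of radius $r$ centered at $x$. *)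

theory Defs
  imports "HOL-Analysis.Analysis"
begin

text \<open>For symmetric matrices (the only case used) the geometric multiplicity
  (dimension of the eigenspace) equals the algebraic multiplicity.\<close>

definition eigvals :: "real^'n^'n \<Rightarrow> real set" where
  "eigvals N = {c. \<exists>v. v \<noteq> 0 \<and> N *v v = c *\<^sub>R v}"

definition eigmult :: "real^'n^'n \<Rightarrow> real \<Rightarrow> nat" where
  "eigmult N c = dim {v. N *v v = c *\<^sub>R v}"

definition M_minus :: "real \<Rightarrow> real^'n^'n \<Rightarrow> real" where
  "M_minus \<Lambda> N =
     (\<Sum>c\<in>eigvals N \<inter> {0<..}. c * real (eigmult N c))
     + \<Lambda> * (\<Sum>c\<in>eigvals N \<inter> {..<0}. c * real (eigmult N c))"

definition C2_closure ::
  "(real^'n) set \<Rightarrow> (real^'n \<Rightarrow> real) \<Rightarrow> (real^'n \<Rightarrow> real^'n) \<Rightarrow> (real^'n \<Rightarrow> real^'n^'n) \<Rightarrow> bool"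
  where
  "C2_closure \<Omega> \<phi> G H \<longleftrightarrow>
     continuous_on (closure \<Omega>) \<phi> \<and> continuous_on (closure \<Omega>) G \<and> continuous_on (closure \<Omega>) H \<and>
     (\<forall>x\<in>\<Omega>. (\<phi> has_derivative (\<lambda>h. G x \<bullet> h)) (at x)) \<and>
     (\<forall>x\<in>\<Omega>. (G has_derivative (\<lambda>h. H x *v h)) (at x))"

definition tangent_below ::
  "(real^'n) set \<Rightarrow> (real^'n \<Rightarrow> real) \<Rightarrow> (real^'n \<Rightarrow> real) \<Rightarrow> real^'n \<Rightarrow> bool" where
  "tangent_below \<Omega> \<phi> u x0 \<longleftrightarrow>
     x0 \<in> \<Omega> \<and> (\<forall>x\<in>closure \<Omega>. \<phi> x \<le> u x) \<and> \<phi> x0 = u x0"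

definition visc_super :: "real \<Rightarrow> (real^'n) set \<Rightarrow> (real^'n \<Rightarrow> real) \<Rightarrow> bool" where
  "visc_super \<Lambda> \<Omega> u \<longleftrightarrow>
     (\<forall>\<phi> G H x0. C2_closure \<Omega> \<phi> G H \<and> tangent_below \<Omega> \<phi> u x0 \<longrightarrow> M_minus \<Lambda> (H x0) \<le> 0)"

end

theory Submission
  imports Defs
begin


lemma mat_apply:
  fixes w h :: "real^'n"
  shows "(\<chi> i j. p * (if i = j then 1 else 0) + q * w$i * w$j) *v h = p *\<^sub>R h + (q * (w \<bullet> h)) *\<^sub>R w"
proof -
  have "(\<Sum>j\<in>UNIV. (p * (if i = j then 1 else 0) + q * w$i * w$j) * h$j) = p * h$i + q * (\<Sum>j\<in>UNIV. w$j * h$j) * w$i" for i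
  proof -
    have "(\<Sum>j\<in>UNIV. (p * (if i = j then 1 else 0) + q * w$i * w$j) * h$j)
       = (\<Sum>j\<in>UNIV. (if i = j then p * h$j else 0)) + (\<Sum>j\<in>UNIV. q * w$i * (w$j * h$j))"
      unfolding sum.distrib[symmetric] by (rule sum.cong) (auto simp: distrib_right)
    also have "\<dots> = p * h$i + q * w$i * (\<Sum>j\<in>UNIV. w$j * h$j)"
      by (simp add: sum_distrib_left)
    finally show ?thesis by simp
  qed
  then show ?thesis
    by (simp add: matrix_vector_mult_def inner_vec_def vec_eq_iff mult.commute)
qed

lemma eig_bound:
  fixes w :: "real^'n"
  assumes w: "w \<noteq> 0" and p: "p < 0" and a: "p + q * (w \<bullet> w) > 0" and L: "\<Lambda> \<ge> 0"
  shows "M_minus \<Lambda> (\<chi> i j. p * (if i = j then 1 else 0) + q * w$i * w$j)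
           \<ge> (p + q * (w \<bullet> w)) + \<Lambda> * (real CARD('n) - 1) * p"
proof -
  define H :: "real^'n^'n" where "H = (\<chi> i j. p * (if i = j then 1 else 0) + q * w$i * w$j)"
  define a where "a = p + q * (w \<bullet> w)"
  have Hv: "H *v v = p *\<^sub>R v + (q * (w \<bullet> v)) *\<^sub>R w" for v
    unfolding H_def by (rule mat_apply)
  have ww: "w \<bullet> w > 0" using w by simp
  have q: "q \<noteq> 0" using a p by auto
  have ev: "c = a \<or> c = p" if "c \<in> eigvals H" for c
  proof -
    have "\<exists>v. v \<noteq> 0 \<and> H *v v = c *\<^sub>R v" using that by (simp add: eigvals_def)
    then obtain v where v: "v \<noteq> 0" "H *v v = c *\<^sub>R v" by blast
    show ?thesis
    proof (cases "w \<bullet> v = 0")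
      case True
      have "c *\<^sub>R v = p *\<^sub>R v" using v(2) Hv[of v] True by auto
      then show ?thesis using v(1) by simp
    next
      case False
      have e1: "c *\<^sub>R v = p *\<^sub>R v + (q * (w \<bullet> v)) *\<^sub>R w" using v(2) Hv[of v] by simp
      have "(c - p) *\<^sub>R v = c *\<^sub>R v - p *\<^sub>R v" by (simp add: scaleR_diff_left)
      also have "\<dots> = (q * (w \<bullet> v)) *\<^sub>R w" using e1 by simp
      finally have "(c - p) *\<^sub>R v = (q * (w \<bullet> v)) *\<^sub>R w" .
      then have "w \<bullet> ((c - p) *\<^sub>R v) = w \<bullet> ((q * (w \<bullet> v)) *\<^sub>R w)" by simp
      then have "(c - p) * (w \<bullet> v) = q * (w \<bullet> v) * (w \<bullet> w)" by simp
      then have "c - p = q * (w \<bullet> w)" using False by (simp add: mult.commute)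
      then show ?thesis unfolding a_def by simp
    qed
  qed
  have apos: "a > 0" using a a_def by simp
  have aev: "a \<in> eigvals H" unfolding eigvals_def
  proof (intro CollectI exI conjI)
    show "w \<noteq> 0" by (rule w)
    show "H *v w = a *\<^sub>R w" using Hv[of w] by (simp add: a_def scaleR_add_left)
  qed
  have "a \<noteq> p" using apos p by simp
  have S1: "eigvals H \<inter> {0<..} = {a}"
  proof
    show "eigvals H \<inter> {0<..} \<subseteq> {a}" using ev p by fastforce
    show "{a} \<subseteq> eigvals H \<inter> {0<..}" using aev apos by simp
  qed
  have ma: "eigmult H a \<ge> 1"
  proof -
    have "w \<in> {v. H *v v = a *\<^sub>R v}" using Hv[of w] by (simp add: a_def scaleR_add_left)
    then have "\<not> {v. H *v v = a *\<^sub>R v} \<subseteq> {0}" using w by blast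
    then have "dim {v. H *v v = a *\<^sub>R v} \<noteq> 0" by simp
    then show ?thesis unfolding eigmult_def by (metis One_nat_def Suc_leI neq0_conv)
  qed
  have mp: "eigmult H p \<le> CARD('n) - 1"
  proof -
    have "{v. H *v v = p *\<^sub>R v} \<subseteq> {x. w \<bullet> x = 0}"
      using Hv q w by auto
    then have "dim {v. H *v v = p *\<^sub>R v} \<le> dim {x. w \<bullet> x = 0}" by (rule dim_subset)
    also have "\<dots> = DIM(real^'n) - 1" using dim_hyperplane[OF w] .
    finally show ?thesis unfolding eigmult_def by simp
  qed
  have S2: "eigvals H \<inter> {..<0} \<subseteq> {p}" using ev apos by fastforce
  have sum2: "(\<Sum>c\<in>eigvals H \<inter> {..<0}. c * real (eigmult H c)) \<ge> p * (real CARD('n) - 1)"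
  proof (cases "p \<in> eigvals H")
    case True
    then have "eigvals H \<inter> {..<0} = {p}" using S2 p by auto
    moreover have "real (eigmult H p) \<le> real CARD('n) - 1" using mp by (metis Suc_le_eq le_add_diff_inverse2 of_nat_1 of_nat_add of_nat_le_iff zero_less_card_finite One_nat_def add_le_cancel_right le_diff_eq)
    ultimately show ?thesis using p by (simp add: mult_left_mono_neg)
  next
    case False
    then have "eigvals H \<inter> {..<0} = {}" using S2 by auto
    moreover have "real CARD('n) \<ge> 1" by simp
    ultimately show ?thesis using p by (simp add: mult_nonpos_nonneg)
  qed
  have sum1: "(\<Sum>c\<in>eigvals H \<inter> {0<..}. c * real (eigmult H c)) \<ge> a"
    using S1 ma apos by simp
  have "M_minus \<Lambda> H \<ge> a + \<Lambda> * (p * (real CARD('n) - 1))"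
    unfolding M_minus_def using sum1 sum2 L by (intro add_mono mult_left_mono) auto
  then show ?thesis unfolding H_def a_def by (simp add: algebra_simps)
qed


lemma sq_deriv:
  fixes x0 :: "real^'n"
  shows "((\<lambda>x. (x - x0) \<bullet> (x - x0)) has_derivative (\<lambda>h. 2 * ((x - x0) \<bullet> h))) (at x)"
proof -
  have d: "((\<lambda>x. x - x0) has_derivative (\<lambda>h. h)) (at x)"
    by (auto intro!: derivative_eq_intros)
  show ?thesis
    using has_derivative_inner[OF d d]
    by (rule has_derivative_eq_rhs) (auto simp: inner_commute)
qed

lemma comp_deriv:
  fixes x0 :: "real^'n"
  assumes "(g has_real_derivative g1) (at ((x - x0) \<bullet> (x - x0)))"
  shows "((\<lambda>x. g ((x - x0) \<bullet> (x - x0))) has_derivative (\<lambda>h. g1 * (2 * ((x - x0) \<bullet> h)))) (at x)"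
proof -
  have "(g has_derivative (*) g1) (at ((x - x0) \<bullet> (x - x0)))"
    using assms by (simp add: has_field_derivative_def)
  from has_derivative_compose[OF sq_deriv this]
  show ?thesis by (simp add: o_def)
qed

lemma radial_C2:
  fixes x0 :: "real^'n" and g g1 g2 :: "real \<Rightarrow> real"
  assumes d1: "\<And>s. s \<ge> 0 \<Longrightarrow> (g has_real_derivative g1 s) (at s)"
    and d2: "\<And>s. s \<ge> 0 \<Longrightarrow> (g1 has_real_derivative g2 s) (at s)"
    and c2: "\<And>s. s \<ge> 0 \<Longrightarrow> isCont g2 s"
  shows "C2_closure \<Omega> (\<lambda>x. A * g ((x - x0) \<bullet> (x - x0)) + B)
     (\<lambda>x. (2 * A * g1 ((x - x0) \<bullet> (x - x0))) *\<^sub>R (x - x0))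
     (\<lambda>x. \<chi> i j. (2 * A * g1 ((x - x0) \<bullet> (x - x0))) * (if i = j then 1 else 0)
                 + (4 * A * g2 ((x - x0) \<bullet> (x - x0))) * (x - x0)$i * (x - x0)$j)"
proof -
  let ?s = "\<lambda>x::real^'n. (x - x0) \<bullet> (x - x0)"
  have s0: "?s x \<ge> 0" for x by simp
  have Dg: "((\<lambda>x. g (?s x)) has_derivative (\<lambda>h. g1 (?s x) * (2 * ((x - x0) \<bullet> h)))) (at x)" for x
    by (rule comp_deriv[OF d1[OF s0]])
  have Dg1: "((\<lambda>x. g1 (?s x)) has_derivative (\<lambda>h. g2 (?s x) * (2 * ((x - x0) \<bullet> h)))) (at x)" for x
    by (rule comp_deriv[OF d2[OF s0]])
  have cg: "isCont (\<lambda>x. g (?s x)) x" for x using has_derivative_continuous[OF Dg] .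
  have cg1: "isCont (\<lambda>x. g1 (?s x)) x" for x using has_derivative_continuous[OF Dg1] .
  have cs: "isCont ?s x" for x using has_derivative_continuous[OF sq_deriv] .
  have cg2: "isCont (\<lambda>x. g2 (?s x)) x" for x
    using continuous_at_compose[OF cs c2[OF s0]] by (simp add: o_def)
  have P1: "continuous_on (closure \<Omega>) (\<lambda>x. A * g (?s x) + B)"
    by (intro continuous_at_imp_continuous_on ballI continuous_intros cg)
  have P2: "continuous_on (closure \<Omega>) (\<lambda>x. (2 * A * g1 (?s x)) *\<^sub>R (x - x0))"
    by (intro continuous_at_imp_continuous_on ballI continuous_intros cg1)
  have P3: "continuous_on (closure \<Omega>) (\<lambda>x. \<chi> i j. (2 * A * g1 (?s x)) * (if i = j then 1 else 0)
                 + (4 * A * g2 (?s x)) * (x - x0)$i * (x - x0)$j)"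
    by (intro continuous_on_vec_lambda continuous_at_imp_continuous_on ballI continuous_intros cg1 cg2)
  have P4: "((\<lambda>x. A * g (?s x) + B) has_derivative (\<lambda>h. ((2 * A * g1 (?s x)) *\<^sub>R (x - x0)) \<bullet> h)) (at x)" for x
    using Dg[of x]
    by (auto intro!: derivative_eq_intros simp: algebra_simps)
  have P5: "((\<lambda>x. (2 * A * g1 (?s x)) *\<^sub>R (x - x0)) has_derivative
      (\<lambda>h. (\<chi> i j. (2 * A * g1 (?s x)) * (if i = j then 1 else 0)
                 + (4 * A * g2 (?s x)) * (x - x0)$i * (x - x0)$j) *v h)) (at x)" for x
  proof -
    have dc: "((\<lambda>x. 2 * A * g1 (?s x)) has_derivative (\<lambda>h. 2 * A * (g2 (?s x) * (2 * ((x - x0) \<bullet> h))))) (at x)"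
      using Dg1[of x] by (auto intro!: derivative_eq_intros)
    have dw: "((\<lambda>x. x - x0) has_derivative (\<lambda>h. h)) (at x)"
      by (auto intro!: derivative_eq_intros)
    show ?thesis
      using has_derivative_scaleR[OF dc dw]
    proof (rule has_derivative_eq_rhs)
      show "(\<lambda>h. (2 * A * g1 (?s x)) *\<^sub>R h + (2 * A * (g2 (?s x) * (2 * ((x - x0) \<bullet> h)))) *\<^sub>R (x - x0))
        = (\<lambda>h. (\<chi> i j. (2 * A * g1 (?s x)) * (if i = j then 1 else 0)
                 + (4 * A * g2 (?s x)) * (x - x0)$i * (x - x0)$j) *v h)"
        unfolding mat_apply by (rule ext) (simp add: algebra_simps)
    qed
  qed
  show ?thesis unfolding C2_closure_def using P1 P2 P3 P4 P5 by blast
qed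


definition gf :: "nat \<Rightarrow> real \<Rightarrow> real \<Rightarrow> real \<Rightarrow> real" where
  "gf k e \<gamma> s = (s^k + e) powr (-\<gamma>)"
definition gf1 :: "nat \<Rightarrow> real \<Rightarrow> real \<Rightarrow> real \<Rightarrow> real" where
  "gf1 k e \<gamma> s = - \<gamma> * real k * s^(k-1) * (s^k + e) powr (-\<gamma>-1)"
definition gf2 :: "nat \<Rightarrow> real \<Rightarrow> real \<Rightarrow> real \<Rightarrow> real" where
  "gf2 k e \<gamma> s = - \<gamma> * real k * (real (k-1) * s^(k-2) * (s^k + e) powr (-\<gamma>-1)
      + s^(k-1) * ((-\<gamma>-1) * (s^k + e) powr (-\<gamma>-2) * (real k * s^(k-1))))"

lemma T_pos: "s \<ge> 0 \<Longrightarrow> e > 0 \<Longrightarrow> s^k + e > (0::real)"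
  by (simp add: add_nonneg_pos)

lemma gf_deriv:
  assumes "s \<ge> 0" "e > 0"
  shows "(gf k e \<gamma> has_real_derivative gf1 k e \<gamma> s) (at s)"
proof -
  have "((\<lambda>s. s^k + e) has_real_derivative (real k * s^(k-1))) (at s)"
    by (auto intro!: derivative_eq_intros)
  from DERIV_fun_powr[OF this T_pos[OF assms], of "-\<gamma>"]
  show ?thesis unfolding gf_def[abs_def] gf1_def
    by (rule DERIV_cong) (simp add: algebra_simps)
qed

lemma gf1_deriv:
  assumes "s \<ge> 0" "e > 0" "k \<ge> 2"
  shows "(gf1 k e \<gamma> has_real_derivative gf2 k e \<gamma> s) (at s)"
proof -
  have d0: "((\<lambda>s. s^k + e) has_real_derivative (real k * s^(k-1))) (at s)"
    by (auto intro!: derivative_eq_intros)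
  have d1: "((\<lambda>s. (s^k + e) powr (-\<gamma>-1)) has_real_derivative ((-\<gamma>-1) * (s^k + e) powr (-\<gamma>-2) * (real k * s^(k-1)))) (at s)"
    using DERIV_fun_powr[OF d0 T_pos[OF assms(1,2)], of "-\<gamma>-1"]
    by (rule DERIV_cong) (simp add: algebra_simps)
  have d2: "((\<lambda>s. s^(k-1)) has_real_derivative (real (k-1) * s^(k-2))) (at s)"
  proof -
    have "((\<lambda>s. s^(k-1)) has_real_derivative (real (k-1) * s^(k-1-1))) (at s)"
      by (auto intro!: derivative_eq_intros)
    moreover have "k - 1 - 1 = k - 2" by simp
    ultimately show ?thesis by simp
  qed
  have "((\<lambda>s. - \<gamma> * real k * (s^(k-1) * (s^k + e) powr (-\<gamma>-1))) has_real_derivative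
      - \<gamma> * real k * (real (k-1) * s^(k-2) * (s^k + e) powr (-\<gamma>-1)
      + s^(k-1) * ((-\<gamma>-1) * (s^k + e) powr (-\<gamma>-2) * (real k * s^(k-1))))) (at s)"
    by (intro DERIV_cmult, rule DERIV_cong[OF DERIV_mult[OF d2 d1]]) (simp add: algebra_simps)
  then show ?thesis unfolding gf1_def[abs_def] gf2_def by (simp add: mult.assoc)
qed

lemma gf2_cont:
  assumes "s \<ge> 0" "e > 0"
  shows "isCont (gf2 k e \<gamma>) s"
proof -
  have "isCont (\<lambda>s. s^k + e) s" by simp
  have tp: "s^k + e > 0" using T_pos[OF assms] .
  have c1: "isCont (\<lambda>s. (s^k + e) powr a) s" for a
    using tp by (intro continuous_intros) auto
  show ?thesis unfolding gf2_def[abs_def]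
    by (intro continuous_intros c1)
qed



lemma gf_pde:
  assumes s: "s > 0" and e: "e > 0" and k: "k \<ge> 2"
  shows "2 * s * gf2 k e \<gamma> s + \<kappa> * gf1 k e \<gamma> s
     = \<gamma> * real k * s^(k-1) * (s^k + e) powr (-\<gamma>-2) * (s^k * (2*\<gamma>*real k + 2 - \<kappa>) - e * (2*real k - 2 + \<kappa>))"
proof -
  define T where "T = s^k + e"
  define P where "P = T powr (-\<gamma>-2)"
  define b where "b = s^(k-2)"
  have Tp: "T > 0" unfolding T_def using T_pos[of s e k] s e by simp
  have TP: "T powr (-\<gamma>-1) = T * P"
  proof -
    have "T powr (-\<gamma>-1) = T powr (1 + (-\<gamma>-2))" by (rule arg_cong[where f="\<lambda>a. T powr a"]) simp
    also have "\<dots> = T powr 1 * T powr (-\<gamma>-2)" by (rule powr_add)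
    finally show ?thesis using Tp unfolding P_def by simp
  qed
  obtain j where kj: "k = j + 2" using k by (metis le_add_diff_inverse2)
  have k1: "s^(k-1) = s * b" unfolding b_def kj by simp
  have k0: "s^k = s * (s * b)" unfolding b_def kj by simp
  have rk: "real (k-1) = real k - 1" using k by (simp add: of_nat_diff)
  have eq1: "gf1 k e \<gamma> s = - \<gamma> * real k * (s*b) * (T * P)"
    unfolding gf1_def T_def[symmetric] TP k1 ..
  have eq2: "gf2 k e \<gamma> s = - \<gamma> * real k * ((real k - 1) * b * (T * P)
      + (s*b) * ((-\<gamma>-1) * P * (real k * (s*b))))"
    unfolding gf2_def T_def[symmetric] TP k1 P_def[symmetric] rk b_def[symmetric] ..
  show ?thesis
    unfolding eq1 eq2 T_def[symmetric] P_def[symmetric] k1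
    unfolding T_def k0 by (simp add: algebra_simps)
qed

lemma gf1_neg:
  assumes s: "s > 0" and e: "e > 0" and k: "k \<ge> 2" and g: "\<gamma> > 0"
  shows "gf1 k e \<gamma> s < 0"
proof -
  have "(s^k + e) powr (-\<gamma>-1) > 0" using T_pos[of s e k] s e by simp
  moreover have "s^(k-1) > 0" using s by simp
  moreover have "real k > 0" using k by simp
  ultimately show ?thesis unfolding gf1_def using g
    by (simp add: mult_pos_pos mult_neg_pos)
qed

lemma gf_mono:
  assumes "0 \<le> t" "t \<le> s" "e > 0" "\<gamma> \<ge> 0"
  shows "gf k e \<gamma> s \<le> gf k e \<gamma> t"
proof -
  have "t^k \<le> s^k" using assms by (simp add: power_mono)
  then show ?thesis unfolding gf_def using assms T_pos[of t e k]
    by (intro powr_mono2') auto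
qed



theorem lemma6p1:
  fixes u :: "real^'n \<Rightarrow> real" and \<Lambda> :: real
  assumes "\<Lambda> \<ge> 1"
    and "continuous_on (cball 0 4) u"
    and "\<forall>x\<in>ball 0 4. u x \<ge> 0"
    and "visc_super \<Lambda> (ball 0 4) u"
  shows "\<forall>x0\<in>ball 0 1. \<forall>\<rho>. 0 < \<rho> \<and> \<rho> \<le> 1 \<longrightarrow>
           Inf (u ` ball x0 \<rho>) \<le> 2 * \<rho> powr (- (real CARD('n) * \<Lambda>)) * u 0"
proof (intro ballI allI impI)
  fix x0 :: "real^'n" and \<rho> :: real
  assume x0: "x0 \<in> ball 0 1" and r: "0 < \<rho> \<and> \<rho> \<le> 1"
  have r0: "\<rho> > 0" and r1: "\<rho> \<le> 1" using r by auto
  note L = assms(1) and ucont = assms(2) and upos = assms(3) and visc = assms(4)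
  define N where "N = real CARD('n)"
  define \<alpha> where "\<alpha> = N * \<Lambda>"
  define \<beta> where "\<beta> = \<alpha> / 2"
  define \<kappa> where "\<kappa> = 1 + \<Lambda> * (N - 1)"
  define k where "k = nat \<lceil>400 * \<beta>^2\<rceil> + 2"
  define \<gamma> where "\<gamma> = \<beta> / real k"
  define x where "x = real k / (10 * \<beta>)"
  define e where "e = (\<rho>^2)^k * exp (- x)"
  define g where "g = gf k e \<gamma>"
  define m where "m = Inf (u ` ball x0 \<rho>)"
  have N1: "N \<ge> 1" unfolding N_def by simp
  have a1: "\<alpha> \<ge> 1" unfolding \<alpha>_def using N1 L by (metis mult_mono' less_eq_real_def mult.right_neutral zero_less_one order_trans)
  have b12: "\<beta> \<ge> 1/2" unfolding \<beta>_def using a1 by simp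
  have k400: "real k \<ge> 400 * \<beta>^2" unfolding k_def by linarith
  have k2: "k \<ge> 2" unfolding k_def by simp
  have kpos: "real k > 0" using k2 by simp
  have gpos: "\<gamma> > 0" unfolding \<gamma>_def using b12 kpos by simp
  have gk: "\<gamma> * real k = \<beta>" unfolding \<gamma>_def using kpos by simp
  have kb: "real k \<ge> \<beta>"
  proof -
    have "400 * \<beta>^2 \<ge> \<beta>" using b12 by (simp add: power2_eq_square)
    then show ?thesis using k400 by linarith
  qed
  have g15: "\<gamma> \<le> 1/15"
  proof -
    have "\<gamma> * real k = \<beta>" by (rule gk)
    have "\<beta> \<le> real k / 15"
    proof -
      have "real k / 15 \<ge> 400 * \<beta>^2 / 15" using k400 by simp
      moreover have "400 * \<beta>^2 / 15 \<ge> \<beta>" using b12 by (simp add: power2_eq_square)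
      ultimately show ?thesis by linarith
    qed
    then show ?thesis unfolding \<gamma>_def using kpos by (simp add: divide_le_eq mult.commute)
  qed
  have xpos: "x > 0" unfolding x_def using kpos b12 by simp
  have epos: "e > 0" unfolding e_def using r0 by simp
  have ele1: "e \<le> 1"
  proof -
    have "(\<rho>^2)^k \<le> 1" using r0 r1 by (simp add: power_le_one)
    moreover have "exp (- x) \<le> 1" using xpos by simp
    ultimately show ?thesis unfolding e_def by (simp add: mult_le_one)
  qed
  have F1: "\<rho> powr \<alpha> * g 0 \<le> 6/5"
  proof -
    have g0: "g 0 = e powr (-\<gamma>)" unfolding g_def gf_def using k2 by (simp add: zero_power)
    have "e powr (-\<gamma>) = ((\<rho>^2)^k) powr (-\<gamma>) * (exp (-x)) powr (-\<gamma>)"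
      unfolding e_def by (rule powr_mult)
    also have "((\<rho>^2)^k) powr (-\<gamma>) = \<rho> powr (- \<alpha>)"
    proof -
      have "(\<rho>^2)^k = \<rho> powr (real (2*k))" using r0 by (metis power_mult powr_realpow)
      then have "((\<rho>^2)^k) powr (-\<gamma>) = \<rho> powr (real (2*k) * (-\<gamma>))" by (simp add: powr_powr)
      also have "real (2*k) * (-\<gamma>) = - \<alpha>" using gk unfolding \<beta>_def by (simp add: algebra_simps)
      finally show ?thesis .
    qed
    also have "(exp (-x)) powr (-\<gamma>) = exp (1/10)"
      unfolding exp_powr_real x_def \<gamma>_def using kpos b12 by (simp add: field_simps)
    finally have "g 0 = \<rho> powr (-\<alpha>) * exp (1/10)" using g0 by simp
    then have "\<rho> powr \<alpha> * g 0 = exp (1/10)" using r0 by (simp add: powr_minus field_simps)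
    also have "\<dots> \<le> 6/5" using exp_bound_lemma[of "1/10::real"] by simp
    finally show ?thesis .
  qed
  have g9pos: "g 9 > 0" unfolding g_def gf_def using epos add_pos_pos[of "(9::real)^k" e] by simp
  have F2: "g 9 \<le> 1/3"
  proof -
    have "g 9 \<le> (9^k) powr (-\<gamma>)" unfolding g_def gf_def
      using epos by (intro powr_mono2') (auto simp: gpos less_imp_le)
    also have "(9^k) powr (-\<gamma>) = (9::real) powr (-\<beta>)"
      using gk by (simp add: powr_realpow[symmetric] powr_powr algebra_simps)
    also have "\<dots> \<le> 9 powr (-(1/2))" using b12 by (intro powr_mono) auto
    also have "(9::real) powr (-(1/2)) = 1/3"
    proof -
      have s9: "sqrt (9::real) = 3" by (rule real_sqrt_unique) auto
      have "(9::real) powr (1/2) = 3" using s9 by (simp add: powr_half_sqrt)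
      then show ?thesis by (simp add: powr_minus)
    qed
    finally show ?thesis .
  qed
  have F3: "g 1 \<ge> 1 - \<gamma>"
  proof -
    have "g 1 = exp (- \<gamma> * ln (1 + e))" unfolding g_def gf_def powr_def using epos by simp
    also have "\<dots> \<ge> 1 + (- \<gamma> * ln (1 + e))" by (rule exp_ge_add_one_self)
    finally have "g 1 \<ge> 1 - \<gamma> * ln (1 + e)" by simp
    moreover have "ln (1 + e) \<le> 1" using ln_add_one_self_le_self[of e] epos ele1 by simp
    moreover have "\<gamma> * ln (1 + e) \<le> \<gamma> * 1" using gpos \<open>ln (1 + e) \<le> 1\<close> by (intro mult_left_mono) auto
    ultimately show ?thesis by linarith
  qed
  have g0g9: "g 0 > g 9"
  proof -
    have "(9::real)^k + e > 0^k + e" using k2 by (simp add: zero_power)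
    then show ?thesis unfolding g_def gf_def using epos gpos k2
      by (intro powr_less_mono2_neg) (auto simp: zero_power)
  qed

  have kappa: "\<kappa> \<le> 2 * \<beta>" unfolding \<kappa>_def \<beta>_def \<alpha>_def using L by (simp add: algebra_simps)
  have kappa0: "\<Lambda> * (N - 1) \<ge> 0" using L N1 by simp
  have x2: "x^2 \<ge> 4 * real k"
  proof -
    have bp: "\<beta> > 0" using b12 by simp
    have "x^2 = real k * (real k / (100 * \<beta>^2))" unfolding x_def by (simp add: power2_eq_square field_simps)
    moreover have "real k / (100 * \<beta>^2) \<ge> 4" using k400 bp by (simp add: field_simps)
    moreover have "real k * 4 \<le> real k * (real k / (100 * \<beta>^2))"
      using calculation(2) kpos by (intro mult_left_mono) auto
    ultimately show ?thesis by linarith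
  qed
  have ex1: "exp x \<ge> x^2 / 2" using exp_lower_Taylor_quadratic[of x] xpos by simp
  have ex2: "(1 + \<Lambda>) * exp x \<ge> 2 * exp x" using L by (intro mult_right_mono) auto
  have ex: "(1 + \<Lambda>) * exp x > 2 * real k - 2 + \<kappa>" using ex1 ex2 x2 kappa kb by linarith
  have F4: "s^k * (1 + \<Lambda>) > e * (2 * real k - 2 + \<kappa>)" if s: "s \<ge> \<rho>^2" for s :: real
  proof -
    have "s^k \<ge> (\<rho>^2)^k" using s by (intro power_mono) auto
    then have A1: "s^k * (1 + \<Lambda>) \<ge> (\<rho>^2)^k * (1 + \<Lambda>)" using L by (intro mult_right_mono) auto
    have "exp (-x) * (2 * real k - 2 + \<kappa>) < exp (-x) * ((1 + \<Lambda>) * exp x)"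
      using ex by (intro mult_strict_left_mono) auto
    also have "\<dots> = 1 + \<Lambda>" by (simp add: exp_minus field_simps)
    finally have "exp (-x) * (2 * real k - 2 + \<kappa>) < 1 + \<Lambda>" .
    then have "(\<rho>^2)^k * (exp (-x) * (2 * real k - 2 + \<kappa>)) < (\<rho>^2)^k * (1 + \<Lambda>)"
      using r0 by (intro mult_strict_left_mono) auto
    then show ?thesis using A1 unfolding e_def by (simp add: mult.assoc)
  qed
  have sub: "ball x0 \<rho> \<subseteq> ball 0 4"
  proof
    fix y assume "y \<in> ball x0 \<rho>"
    then have "norm (y - x0) < 1" using r1 by (simp add: dist_norm norm_minus_commute)
    moreover have "norm x0 < 1" using x0 by simp
    moreover have "norm y \<le> norm x0 + norm (y - x0)" by (metis add_diff_cancel_left' norm_triangle_ineq diff_add_cancel add.commute)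
    ultimately show "y \<in> ball 0 4" by simp
  qed
  have bdd: "bdd_below (u ` ball x0 \<rho>)"
    using upos sub by (intro bdd_belowI[of _ 0]) auto
  have um: "m \<le> u y" if "y \<in> ball x0 \<rho>" for y
    unfolding m_def using bdd that by (intro cInf_lower) auto
  have ucb: "u y \<ge> 0" if "y \<in> cball 0 4" for y
    using continuous_ge_on_closure[of "ball (0::real^'n) 4" u y 0] ucont upos that by auto
  have u0: "u 0 \<ge> 0" using upos by simp
  show "Inf (u ` ball x0 \<rho>) \<le> 2 * \<rho> powr (- (real CARD('n) * \<Lambda>)) * u 0"
  proof (rule ccontr)
    assume "\<not> ?thesis"
    then have lt: "2 * \<rho> powr (-\<alpha>) * u 0 < m" unfolding m_def \<alpha>_def N_def by simp
    have mpos: "m > 0" using lt u0 by (smt (verit) mult_nonneg_nonneg powr_ge_zero)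
    have rpa: "\<rho> powr \<alpha> > 0" using r0 by simp
    have u0lt: "2 * u 0 < \<rho> powr \<alpha> * m"
    proof -
      have pp: "\<rho> powr \<alpha> * \<rho> powr (-\<alpha>) = 1" using r0 by (simp add: powr_add[symmetric])
      have "\<rho> powr \<alpha> * (2 * \<rho> powr (-\<alpha>) * u 0) = 2 * u 0 * (\<rho> powr \<alpha> * \<rho> powr (-\<alpha>))"
        by (simp add: algebra_simps)
      then have e1: "\<rho> powr \<alpha> * (2 * \<rho> powr (-\<alpha>) * u 0) = 2 * u 0" using pp by simp
      moreover have "\<rho> powr \<alpha> * (2 * \<rho> powr (-\<alpha>) * u 0) < \<rho> powr \<alpha> * m"
        using lt rpa by (intro mult_strict_left_mono) auto
      ultimately show ?thesis by linarith
    qed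
    define A where "A = m / (g 0 - g 9)"
    have Apos: "A > 0" unfolding A_def using mpos g0g9 by simp
    have Am: "A * (g 0 - g 9) = m" unfolding A_def using g0g9 by simp
    define \<psi> where "\<psi> = (\<lambda>y. A * g ((y - x0) \<bullet> (y - x0)) + (- A * g 9))"
    have \<psi>m: "\<psi> y \<le> m" for y
    proof -
      have "g ((y - x0) \<bullet> (y - x0)) \<le> g 0" unfolding g_def using epos gpos by (intro gf_mono) auto
      then have "A * (g ((y - x0) \<bullet> (y - x0)) - g 9) \<le> A * (g 0 - g 9)" using Apos by (intro mult_left_mono) auto
      then show ?thesis unfolding \<psi>_def Am[symmetric] by (simp add: algebra_simps)
    qed
    have \<psi>0: "2 * \<psi> 0 \<ge> \<rho> powr \<alpha> * m"
    proof -
      have "(0 - x0) \<bullet> (0 - x0) = (norm x0)^2" by (simp add: power2_norm_eq_inner)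
      also have "\<dots> \<le> 1" using x0 by (simp add: power_le_one)
      finally have "g ((0 - x0) \<bullet> (0 - x0)) \<ge> g 1" unfolding g_def using epos gpos by (intro gf_mono) auto
      moreover have "2 * (g 1 - g 9) \<ge> \<rho> powr \<alpha> * (g 0 - g 9)"
      proof -
        have "\<rho> powr \<alpha> * g 9 \<ge> 0" using g9pos rpa by simp
        then show ?thesis using F1 F2 F3 g15 by (simp add: algebra_simps)
      qed
      ultimately have "2 * (g ((0 - x0) \<bullet> (0 - x0)) - g 9) \<ge> \<rho> powr \<alpha> * (g 0 - g 9)" by (smt (verit))
      then have "A * (2 * (g ((0 - x0) \<bullet> (0 - x0)) - g 9)) \<ge> A * (\<rho> powr \<alpha> * (g 0 - g 9))"
        using Apos by (intro mult_left_mono) auto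
      then show "2 * \<psi> 0 \<ge> \<rho> powr \<alpha> * m" unfolding \<psi>_def Am[symmetric] by (simp add: algebra_simps)
    qed
    have C2: "C2_closure (ball 0 4) (\<lambda>y. A * g ((y - x0) \<bullet> (y - x0)) + B)
      (\<lambda>y. (2 * A * gf1 k e \<gamma> ((y - x0) \<bullet> (y - x0))) *\<^sub>R (y - x0))
      (\<lambda>y. \<chi> i j. (2 * A * gf1 k e \<gamma> ((y - x0) \<bullet> (y - x0))) * (if i = j then 1 else 0)
                 + (4 * A * gf2 k e \<gamma> ((y - x0) \<bullet> (y - x0))) * (y - x0)$i * (y - x0)$j)" for B
      unfolding g_def
      by (rule radial_C2) (use epos k2 in \<open>auto intro: gf_deriv gf1_deriv gf2_cont\<close>)
    have cl: "closure (ball (0::real^'n) 4) = cball 0 4" by simp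
    have \<psi>c: "continuous_on (cball 0 4) \<psi>"
      using C2[of "- A * g 9"] unfolding C2_closure_def cl \<psi>_def by blast
    define f where "f = (\<lambda>y. \<psi> y - u y)"
    have fc: "continuous_on (cball 0 4) f" unfolding f_def using \<psi>c ucont by (intro continuous_on_diff)
    obtain z where z: "z \<in> cball 0 4" and zmax: "\<forall>y\<in>cball 0 4. f y \<le> f z"
      using continuous_attains_sup[OF compact_cball _ fc] by auto
    have tpos: "f z > 0"
    proof -
      have "f 0 \<le> f z" using zmax by simp
      moreover have "f 0 > 0" unfolding f_def using \<psi>0 u0lt by linarith
      ultimately show ?thesis by simp
    qed
    define s where "s = (z - x0) \<bullet> (z - x0)"
    have s_eq: "s = (norm (z - x0))^2" unfolding s_def by (simp add: power2_norm_eq_inner)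
    have notin: "z \<notin> ball x0 \<rho>"
    proof
      assume "z \<in> ball x0 \<rho>"
      then have "m \<le> u z" by (rule um)
      then show False using tpos \<psi>m[of z] unfolding f_def by simp
    qed
    then have nr: "norm (z - x0) \<ge> \<rho>" by (simp add: dist_norm norm_minus_commute)
    then have sr: "s \<ge> \<rho>^2" unfolding s_eq using r0 by (intro power_mono) auto
    have spos: "s > 0" using sr r0 by (smt (verit) zero_less_power)
    have s9: "s < 9"
    proof (rule ccontr)
      assume "\<not> s < 9"
      then have "g s \<le> g 9" unfolding g_def using epos gpos by (intro gf_mono) auto
      then have "\<psi> z \<le> 0" unfolding \<psi>_def s_def[symmetric] using Apos by (simp add: mult_left_mono)
      then show False using tpos ucb[OF z] unfolding f_def by simp
    qed
    have n3: "norm (z - x0) < 3"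
    proof (rule ccontr)
      assume "\<not> norm (z - x0) < 3"
      then have "(3::real)^2 \<le> (norm (z - x0))^2" by (intro power_mono) auto
      then show False using s9 s_eq by simp
    qed
    have zb: "z \<in> ball 0 4"
    proof -
      have "norm x0 < 1" using x0 by simp
      moreover have "norm z \<le> norm x0 + norm (z - x0)" by (metis add_diff_cancel_left' norm_triangle_ineq diff_add_cancel add.commute)
      ultimately show ?thesis using n3 by simp
    qed
    define t where "t = f z"
    have tan: "tangent_below (ball 0 4) (\<lambda>y. A * g ((y - x0) \<bullet> (y - x0)) + (- A * g 9 - t)) u z"
      unfolding tangent_below_def cl
    proof (intro conjI ballI)
      show "z \<in> ball 0 4" by (rule zb)
      fix y assume "y \<in> cball (0::real^'n) 4"
      then have "f y \<le> t" using zmax unfolding t_def by blast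
      then show "A * g ((y - x0) \<bullet> (y - x0)) + (- A * g 9 - t) \<le> u y" unfolding f_def \<psi>_def by simp
    next
      show "A * g ((z - x0) \<bullet> (z - x0)) + (- A * g 9 - t) = u z" unfolding t_def f_def \<psi>_def by simp
    qed
    have M0: "M_minus \<Lambda> (\<chi> i j. (2 * A * gf1 k e \<gamma> s) * (if i = j then 1 else 0)
                 + (4 * A * gf2 k e \<gamma> s) * (z - x0)$i * (z - x0)$j) \<le> 0"
      using visc[unfolded visc_super_def, rule_format, OF conjI[OF C2 tan]] unfolding s_def .
    define Q where "Q = 2 * s * gf2 k e \<gamma> s + \<kappa> * gf1 k e \<gamma> s"
    have Qpos: "Q > 0"
    proof -
      have "Q = \<gamma> * real k * s^(k-1) * (s^k + e) powr (-\<gamma>-2) * (s^k * (2*\<gamma>*real k + 2 - \<kappa>) - e * (2*real k - 2 + \<kappa>))"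
        unfolding Q_def by (rule gf_pde[OF spos epos k2])
      moreover have "2*\<gamma>*real k + 2 - \<kappa> = 1 + \<Lambda>" using gk unfolding \<kappa>_def \<beta>_def \<alpha>_def by (simp add: algebra_simps)
      moreover have "s^k * (1 + \<Lambda>) - e * (2*real k - 2 + \<kappa>) > 0" using F4[OF sr] by simp
      moreover have "\<gamma> * real k * s^(k-1) * (s^k + e) powr (-\<gamma>-2) > 0"
        using gpos kpos spos epos T_pos[of s e k] by simp
      ultimately show ?thesis by simp
    qed
    have g1n: "gf1 k e \<gamma> s < 0" by (rule gf1_neg[OF spos epos k2 gpos])
    have ww: "(z - x0) \<bullet> (z - x0) = s" unfolding s_def ..
    have w0: "z - x0 \<noteq> 0" using spos ww by auto
    have pn: "2 * A * gf1 k e \<gamma> s < 0" using Apos g1n by (simp add: mult_pos_neg)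
    have lam: "\<Lambda> * (N - 1) * gf1 k e \<gamma> s \<le> 0" using kappa0 g1n by (simp add: mult_nonneg_nonpos)
    have pq: "2 * A * gf1 k e \<gamma> s + 4 * A * gf2 k e \<gamma> s * ((z - x0) \<bullet> (z - x0)) > 0"
    proof -
      have "2 * A * gf1 k e \<gamma> s + 4 * A * gf2 k e \<gamma> s * ((z - x0) \<bullet> (z - x0))
          = 2 * A * (Q - \<Lambda> * (N - 1) * gf1 k e \<gamma> s)"
        unfolding ww Q_def \<kappa>_def by (simp add: algebra_simps)
      moreover have "Q - \<Lambda> * (N - 1) * gf1 k e \<gamma> s > 0" using Qpos lam by simp
      ultimately show ?thesis using Apos by simp
    qed
    have "M_minus \<Lambda> (\<chi> i j. (2 * A * gf1 k e \<gamma> s) * (if i = j then 1 else 0)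
                 + (4 * A * gf2 k e \<gamma> s) * (z - x0)$i * (z - x0)$j)
        \<ge> (2 * A * gf1 k e \<gamma> s + 4 * A * gf2 k e \<gamma> s * ((z - x0) \<bullet> (z - x0)))
          + \<Lambda> * (real CARD('n) - 1) * (2 * A * gf1 k e \<gamma> s)"
      using L by (intro eig_bound w0 pn pq) auto
    also have "(2 * A * gf1 k e \<gamma> s + 4 * A * gf2 k e \<gamma> s * ((z - x0) \<bullet> (z - x0)))
          + \<Lambda> * (real CARD('n) - 1) * (2 * A * gf1 k e \<gamma> s) = 2 * A * Q"
      unfolding ww Q_def \<kappa>_def N_def by (simp add: algebra_simps)
    finally have "M_minus \<Lambda> (\<chi> i j. (2 * A * gf1 k e \<gamma> s) * (if i = j then 1 else 0)
                 + (4 * A * gf2 k e \<gamma> s) * (z - x0)$i * (z - x0)$j) > 0"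
      using Apos Qpos by (smt (verit) mult_pos_pos)
    then show False using M0 by simp
  qed
qed
end
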